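(* Let $f:X\to Y$ be a homomorphism of complex tori, where $X$ has dimension $g$ and period matrix $(\tau\ \ I_g)$ and $Y$ has dimension $h$ and period matrix $(\sigma\ \ I_h)$ (with $\det\operatorname{Im}\tau\ne0$, $\det\operatorname{Im}\sigma\neq0$). Write $F_X=\mathbb{Q}(\{\tau_{ij}\})$, $F_Y=\mathbb{Q}(\{\sigma_{ij}\})$, $\mathfrak{d}_X=[F_X:\mathbb{Q}]$, $\mathfrak{d}_Y=[F_Y:\mathbb{Q}]$. Then: (1) if $f$ has finite kernel, then $F_X\subseteq F_Y$, in particular $\mathfrak{d}_X\le\mathfrak{d}_Y$; (2) if $f$ is surjective, then $F_Y\subseteq F_X$, in particular $\mathfrak{d}_Y\le\mathfrak{d}_X$; (3) if $f$ is an isogeny, then $F_X=F_Y$ and $\mathfrak{d}_X=\mathfrak{d}_Y$; (4) $F_X=F_{X^\vee}$, where $X^\vee$ is the dual torus. In particular $F_X$ and $\mathfrak{d}_X$ depend only on $X$ (indeed only on its isogeny class), not on the chosen period matrix of the form $(\tau\ \ I_g)$.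
   Context: A complex torus of dimension $g$ with period matrix $\Pi=(\tau\ \ I_g)$ is $X=\mathbb{C}^g/\Lambda$, where $\Lambda$ is the lattice generated by the $2g$ columns of $\Pi$; every complex torus admits such a period matrix with $\det(\operatorname{Im}\tau)\neq0$. For such a period matrix set $F_X=\mathbb{Q}(\{\tau_{ij}\})\subseteq\mathbb{C}$ and $\mathfrak{d}_X=[F_X:\mathbb{Q}]\in\mathbb{N}\cup\{\infty\}$. *)

theory Defs
  imports "HOL-Analysis.Analysis" "HOL-Library.Extended_Nat"
begin

text \<open>Lattice generated by the columns of the period matrix (tau I_g) in C^g.\<close>
definition period_lattice :: "complex^'g^'g \<Rightarrow> (complex^'g) set" where
  "period_lattice \<tau> =
     {\<tau> *v (\<chi> i. of_int (m $ i)) + (\<chi> i. of_int (n $ i)) | m n :: int^'g. True}"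

definition Im_mat :: "complex^'g^'g \<Rightarrow> real^'g^'g" where
  "Im_mat \<tau> = (\<chi> i j. Im (\<tau> $ i $ j))"

definition subfield_C :: "complex set \<Rightarrow> bool" where
  "subfield_C K \<longleftrightarrow> 0 \<in> K \<and> 1 \<in> K \<and>
     (\<forall>x\<in>K. \<forall>y\<in>K. x + y \<in> K \<and> x * y \<in> K) \<and>
     (\<forall>x\<in>K. - x \<in> K \<and> inverse x \<in> K)"

definition gen_field :: "complex set \<Rightarrow> complex set" where
  "gen_field S = \<Inter> {K. subfield_C K \<and> S \<subseteq> K}"

definition F_field :: "complex^'g^'g \<Rightarrow> complex set" where
  "F_field \<tau> = gen_field {\<tau> $ i $ j | i j. True}"

definition Q_indep :: "complex set \<Rightarrow> bool" where
  "Q_indep B \<longleftrightarrow> (\<forall>c :: complex \<Rightarrow> rat.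
      (\<Sum>b\<in>B. of_rat (c b) * b) = 0 \<longrightarrow> (\<forall>b\<in>B. c b = 0))"

text \<open>[K : Q] as an element of N \<union> {\<infinity>}: the supremum of sizes of finite Q-independent subsets.\<close>
definition Q_degree :: "complex set \<Rightarrow> enat" where
  "Q_degree K = Sup {enat (card B) | B. finite B \<and> B \<subseteq> K \<and> Q_indep B}"

text \<open>Analytic representation A of a homomorphism C^g/\<Lambda>_X \<rightarrow> C^h/\<Lambda>_Y.\<close>
definition is_torus_hom :: "complex^'g^'g \<Rightarrow> complex^'h^'h \<Rightarrow> complex^'g^'h \<Rightarrow> bool" where
  "is_torus_hom \<tau> \<sigma> A \<longleftrightarrow> (\<forall>z\<in>period_lattice \<tau>. A *v z \<in> period_lattice \<sigma>)"

definition hom_kernel :: "complex^'g^'g \<Rightarrow> complex^'h^'h \<Rightarrow> complex^'g^'h \<Rightarrow> (complex^'g) set set" where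
  "hom_kernel \<tau> \<sigma> A = (\<lambda>z. (\<lambda>l. z + l) ` period_lattice \<tau>) ` {z. A *v z \<in> period_lattice \<sigma>}"

definition hom_surjective :: "complex^'h^'h \<Rightarrow> complex^'g^'h \<Rightarrow> bool" where
  "hom_surjective \<sigma> A \<longleftrightarrow> (\<forall>w. \<exists>z. A *v z - w \<in> period_lattice \<sigma>)"

definition is_isogeny :: "complex^'g^'g \<Rightarrow> complex^'h^'h \<Rightarrow> complex^'g^'h \<Rightarrow> bool" where
  "is_isogeny \<tau> \<sigma> A \<longleftrightarrow> is_torus_hom \<tau> \<sigma> A \<and> hom_surjective \<sigma> A \<and> finite (hom_kernel \<tau> \<sigma> A)"

text \<open>Dual torus X^\<or> = \<Omega>bar/\<Lambda>^\<or>, identifying the antilinear functional l_w(v) = \<Sum> w_i conj(v_i)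
  with w \<in> C^g; \<Lambda>^\<or> = {l. Im l(\<Lambda>) \<subseteq> Z}.\<close>
definition dual_lattice :: "complex^'g^'g \<Rightarrow> (complex^'g) set" where
  "dual_lattice \<tau> = {w. \<forall>v\<in>period_lattice \<tau>. Im (\<Sum>i\<in>UNIV. w $ i * cnj (v $ i)) \<in> \<int>}"

end

theory Submission
  imports Defs
begin


lemma subfield_C_Inter: "subfield_C (gen_field S)"
  unfolding gen_field_def subfield_C_def by blast

lemma gen_field_sub: "S \<subseteq> gen_field S"
  unfolding gen_field_def by blast

lemma gen_field_min: "subfield_C K \<Longrightarrow> S \<subseteq> K \<Longrightarrow> gen_field S \<subseteq> K"
  unfolding gen_field_def by blast

context fixes K assumes K: "subfield_C K" begin
lemma sf0: "0 \<in> K" and sf1: "1 \<in> K" and sfadd: "x \<in> K \<Longrightarrow> y \<in> K \<Longrightarrow> x + y \<in> K"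
  and sfmult: "x \<in> K \<Longrightarrow> y \<in> K \<Longrightarrow> x * y \<in> K"
  and sfuminus: "x \<in> K \<Longrightarrow> - x \<in> K" and sfinv: "x \<in> K \<Longrightarrow> inverse x \<in> K"
  using K unfolding subfield_C_def by auto
lemma sfdiff: "x \<in> K \<Longrightarrow> y \<in> K \<Longrightarrow> x - y \<in> K"
  using sfadd sfuminus by (metis diff_conv_add_uminus)
lemma sfdivide: "x \<in> K \<Longrightarrow> y \<in> K \<Longrightarrow> x / y \<in> K"
  using sfmult sfinv by (metis divide_inverse)
lemma sfsum: "(\<And>i. i \<in> A \<Longrightarrow> f i \<in> K) \<Longrightarrow> sum f A \<in> K"
  by (induction A rule: infinite_finite_induct) (auto intro: sf0 sfadd)
lemma sfprod: "(\<And>i. i \<in> A \<Longrightarrow> f i \<in> K) \<Longrightarrow> prod f A \<in> K"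
  by (induction A rule: infinite_finite_induct) (auto intro: sf1 sfmult)
lemma sfnat: "of_nat n \<in> K"
  by (induction n) (auto intro: sf0 sf1 sfadd)
lemma sfint: "of_int n \<in> K"
proof (cases "n \<ge> 0")
  case True then show ?thesis using sfnat[of "nat n"] by simp
next
  case False then show ?thesis using sfuminus[OF sfnat[of "nat (-n)"]] by simp
qed
lemma sfdet: fixes A :: "complex^'n^'n" assumes "\<And>i j. A$i$j \<in> K" shows "det A \<in> K"
  unfolding det_def by (intro sfsum sfmult sfint sfprod assms)
end

lemma inj_square_sub:
  fixes B :: "'a::field^'n^'m"
  assumes "inj ((*v) B)"
  obtains r :: "'n \<Rightarrow> 'm" where "det (\<chi> i. B $ r i) \<noteq> 0"
proof -
  have sp: "vec.span (rows B) = UNIV"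
    using assms matrix_left_invertible_span_rows_gen matrix_left_invertible_injective by metis
  obtain S where S: "S \<subseteq> rows B" "vec.independent S" "rows B \<subseteq> vec.span S"
    using vec.maximal_independent_subset by blast
  have fin: "finite (rows B)" unfolding rows_def
    using finite_imageI[of UNIV "\<lambda>i. row i B"] by (simp add: full_SetCompr_eq)
  have finS: "finite S" using S(1) fin finite_subset by blast
  have "vec.span (rows B) \<subseteq> vec.span S"
    using S(3) by (metis vec.span_mono vec.span_span)
  then have US: "UNIV \<subseteq> vec.span S" using sp by simp
  have "card S = vec.dim (UNIV :: ('a^'n) set)"
    using vec.basis_card_eq_dim[OF _ US S(2)] by simp
  then have cS: "card S = card (UNIV :: 'n set)" using vec_dim_card[where 'a='a and 'n='n] by simp
  have "\<exists>h. bij_betw h (UNIV :: 'n set) S"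
    by (rule finite_same_card_bij) (simp_all add: finS cS)
  then obtain f where f: "bij_betw f (UNIV :: 'n set) S" by blast
  define r where "r i = (SOME j. row j B = f i)" for i
  have r: "B $ r i = f i" for i
  proof -
    have "f i \<in> S" using f by (simp add: bij_betw_apply)
    then have "f i \<in> rows B" using S(1) by (rule subsetD[rotated])
    then have "\<exists>j. row j B = f i" unfolding rows_def by auto
    then have "row (r i) B = f i" unfolding r_def by (rule someI_ex)
    then show ?thesis by (simp add: row_def vec_lambda_eta)
  qed
  define C where "C = (\<chi> i. B $ r i)"
  have rowC: "row i C = f i" for i unfolding C_def row_def by (simp add: r vec_lambda_eta)
  have "rows C = range f" unfolding rows_def by (auto simp: rowC)
  then have "rows C = S" using f by (simp add: bij_betw_def)
  then have "vec.span (rows C) = UNIV" using US by (simp add: top_le)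
  then have "invertible C"
    unfolding invertible_left_inverse by (simp add: matrix_left_invertible_span_rows_gen)
  then show ?thesis using that unfolding C_def by (simp add: invertible_det_nz)
qed

lemma core:
  fixes B :: "complex^'n^'m" and Y :: "complex^'p^'n"
  assumes K: "subfield_C K" and inj: "inj ((*v) B)"
    and BK: "\<And>i j. B$i$j \<in> K" and BYK: "\<And>i j. (B ** Y)$i$j \<in> K"
  shows "Y$k$l \<in> K"
proof -
  obtain r :: "'n \<Rightarrow> 'm" where d: "det (\<chi> i. B $ r i) \<noteq> 0"
    using inj_square_sub[OF inj] by blast
  define C where "C = (\<chi> i. B $ r i)"
  define y where "y = (\<chi> k. Y$k$l)"
  have Cy: "(C *v y)$i = (B ** Y)$(r i)$l" for i
    by (simp add: C_def y_def matrix_vector_mult_def matrix_matrix_mult_def)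
  have "det (\<chi> i j. if j=k then (C *v y)$i else C$i$j) = y$k * det C"
    by (rule cramer_lemma)
  then have "Y$k$l = det (\<chi> i j. if j=k then (C *v y)$i else C$i$j) / det C"
    using d by (simp add: C_def y_def)
  also have "\<dots> \<in> K"
    by (intro sfdivide[OF K] sfdet[OF K]) (auto simp: Cy BYK, auto simp add: C_def BK)
  finally show ?thesis .
qed


definition ivec :: "int^'n \<Rightarrow> complex^'n" where "ivec m = (\<chi> i. of_int (m$i))"
definition uv :: "'n \<Rightarrow> int^'n" where "uv j = (\<chi> i. if i = j then 1 else 0)"

lemma ivec_nth[simp]: "ivec m $ i = of_int (m$i)" by (simp add: ivec_def)
lemma ivec_0[simp]: "ivec 0 = 0" by (simp add: vec_eq_iff)
lemma uv_nth[simp]: "uv j $ i = (if i = j then 1 else 0)" by (simp add: uv_def)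
lemma mult_ivec_uv: "M *v ivec (uv j) = (\<chi> i. M$i$j)"
proof -
  have "(\<Sum>k\<in>UNIV. M$i$k * of_int (uv j $ k)) = M$i$j" for i
    by (simp add: if_distrib cong: if_cong)
  then show ?thesis by (simp add: vec_eq_iff matrix_vector_mult_def)
qed

lemma period_lattice_ivec: "period_lattice \<tau> = {\<tau> *v ivec m + ivec n | m n. True}"
  unfolding period_lattice_def ivec_def ..
lemma lat_mem: "\<tau> *v ivec m + ivec n \<in> period_lattice \<tau>"
  unfolding period_lattice_ivec by blast
lemma lat_E: "z \<in> period_lattice \<tau> \<Longrightarrow> \<exists>m n. z = \<tau> *v ivec m + ivec n"
  unfolding period_lattice_ivec by blast
lemma lat_0: "0 \<in> period_lattice \<tau>"
  using lat_mem[of \<tau> 0 0] by simp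
lemma lat_col: "(\<chi> i. \<tau>$i$j) \<in> period_lattice \<tau>"
  using lat_mem[of \<tau> "uv j" 0] by (simp add: mult_ivec_uv)
lemma lat_unit: "ivec (uv j) \<in> period_lattice \<tau>"
  using lat_mem[of \<tau> 0 "uv j"] by simp

lemma F_subfield: "subfield_C (F_field \<tau>)"
  unfolding F_field_def by (rule subfield_C_Inter)
lemma F_entry: "\<tau>$i$j \<in> F_field \<tau>"
  unfolding F_field_def by (rule subsetD[OF gen_field_sub]) blast
lemma F_subI: assumes "subfield_C K" "\<And>i j. \<tau>$i$j \<in> K" shows "F_field \<tau> \<subseteq> K"
  unfolding F_field_def by (rule gen_field_min[OF assms(1)]) (use assms(2) in blast)
lemma lat_entries: assumes "z \<in> period_lattice \<sigma>" shows "z$i \<in> F_field \<sigma>"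
proof -
  obtain m n where z: "z = \<sigma> *v ivec m + ivec n" using lat_E[OF assms] by blast
  show ?thesis unfolding z using F_subfield[of \<sigma>]
    unfolding matrix_vector_mult_def vector_add_component vec_lambda_beta ivec_nth
    by (intro sfadd[OF F_subfield] sfsum[OF F_subfield] sfmult[OF F_subfield] sfint[OF F_subfield] F_entry)
qed

lemma L1:
  fixes A :: "complex^'g^'h" and \<tau> :: "complex^'g^'g" and \<sigma> :: "complex^'h^'h"
  assumes inj: "inj ((*v) A)" and hom: "\<And>z. z \<in> period_lattice \<tau> \<Longrightarrow> A *v z \<in> period_lattice \<sigma>"
  shows "F_field \<tau> \<subseteq> F_field \<sigma>"
proof (rule F_subI[OF F_subfield])
  fix k l
  have AK: "A$i$j \<in> F_field \<sigma>" for i j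
  proof -
    have "(A *v ivec (uv j)) $ i \<in> F_field \<sigma>" by (rule lat_entries[OF hom[OF lat_unit]])
    then show ?thesis by (simp add: mult_ivec_uv)
  qed
  have ATK: "(A ** \<tau>)$i$j \<in> F_field \<sigma>" for i j
  proof -
    have "(A *v (\<chi> i. \<tau>$i$j)) $ i \<in> F_field \<sigma>" by (rule lat_entries[OF hom[OF lat_col]])
    then show ?thesis by (simp add: matrix_vector_mult_def matrix_matrix_mult_def)
  qed
  show "\<tau>$k$l \<in> F_field \<sigma>" by (rule core[OF F_subfield inj AK ATK])
qed



lemma countable_lattice: "countable (period_lattice \<tau>)"
proof -
  have "period_lattice \<tau> = (\<lambda>(m,n). \<tau> *v ivec m + ivec n) ` UNIV"
    unfolding period_lattice_ivec by auto
  then show ?thesis by simp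
qed

lemma mult_scale: "A *v (c *s z) = c *s (A *v (z :: 'a::comm_ring_1^'n))"
  by (simp add: vec_eq_iff matrix_vector_mult_def sum_distrib_left algebra_simps)

lemma kernel_inj:
  assumes fin: "finite (hom_kernel \<tau> \<sigma> A)"
  shows "inj ((*v) A)"
proof (rule ccontr)
  assume "\<not> inj ((*v) A)"
  then obtain z where z: "A *v z = 0" "z \<noteq> 0"
    using matrix_left_invertible_ker matrix_left_invertible_injective by metis
  define f where "f t = complex_of_real t *s z" for t
  have sub: "range f \<subseteq> \<Union> (hom_kernel \<tau> \<sigma> A)"
  proof
    fix x assume "x \<in> range f"
    then obtain t where x: "x = f t" by blast
    have "A *v f t = 0" unfolding f_def mult_scale z by simp
    then have "(\<lambda>l. f t + l) ` period_lattice \<tau> \<in> hom_kernel \<tau> \<sigma> A"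
      unfolding hom_kernel_def using lat_0[of \<sigma>] by auto
    moreover have "x \<in> (\<lambda>l. f t + l) ` period_lattice \<tau>"
      using lat_0[of \<tau>] x by force
    ultimately show "x \<in> \<Union> (hom_kernel \<tau> \<sigma> A)" by blast
  qed
  have "countable (\<Union> (hom_kernel \<tau> \<sigma> A))"
  proof (rule countable_UN[of _ id, simplified])
    show "countable (hom_kernel \<tau> \<sigma> A)" using fin by (rule countable_finite)
    fix X assume "X \<in> hom_kernel \<tau> \<sigma> A"
    then obtain w where "X = (\<lambda>l. w + l) ` period_lattice \<tau>" unfolding hom_kernel_def by blast
    then show "countable X" using countable_image[OF countable_lattice[of \<tau>]] by simp
  qed
  then have c: "countable (range f)" using sub countable_subset by blast
  obtain i where i: "z $ i \<noteq> 0" using z(2) by (metis vec_eq_iff zero_index)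
  have "inj f"
  proof
    fix s t assume "f s = f t"
    then have "complex_of_real s * z$i = complex_of_real t * z$i" unfolding f_def
      by (metis vector_smult_component)
    then show "s = t" using i by simp
  qed
  then have "countable (UNIV :: real set)" using countable_image_inj_on[OF c] by simp
  then show False using uncountable_UNIV_real by blast
qed



lemma linear_mult: "linear (\<lambda>x. (A :: complex^'n^'m) *v x)"
proof (rule linearI)
  show "A *v (x + y) = A *v x + A *v y" for x y by (simp add: matrix_vector_right_distrib)
  show "A *v (r *\<^sub>R x) = r *\<^sub>R (A *v x)" for r x
    by (simp add: vec_eq_iff matrix_vector_mult_def scaleR_sum_right)
qed

lemma surj_from_hom_surjective:
  fixes A :: "complex^'g^'h"
  assumes hs: "hom_surjective \<sigma> A"
  shows "surj ((*v) A)"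
proof (rule ccontr)
  assume ns: "\<not> surj ((*v) A)"
  let ?R = "range ((*v) A)"
  have sub: "subspace ?R" using linear_subspace_image[OF linear_mult subspace_UNIV] by simp
  have "dim ?R \<noteq> DIM(complex^'h)"
    unfolding dim_eq_full using sub ns by (simp only: span_eq_iff[THEN iffD2, OF sub]) simp
  then have "dim ?R < DIM(complex^'h)" using dim_subset_UNIV[of ?R] by linarith
  then have neg: "negligible ?R" by (rule negligible_lowdim)
  have cov: "UNIV \<subseteq> \<Union> ((\<lambda>l. (+) (-l) ` ?R) ` period_lattice \<sigma>)"
  proof
    fix w :: "complex^'h"
    obtain z where "A *v z - w \<in> period_lattice \<sigma>" using hs unfolding hom_surjective_def by blast
    moreover have "w = - (A *v z - w) + A *v z" by simp
    ultimately show "w \<in> \<Union> ((\<lambda>l. (+) (-l) ` ?R) ` period_lattice \<sigma>)" by blast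
  qed
  have "negligible (\<Union> ((\<lambda>l. (+) (-l) ` ?R) ` period_lattice \<sigma>))"
  proof (rule negligible_countable_Union)
    show "countable ((\<lambda>l. (+) (-l) ` ?R) ` period_lattice \<sigma>)"
      using countable_image[OF countable_lattice[of \<sigma>]] by blast
    fix S assume "S \<in> (\<lambda>l. (+) (-l) ` ?R) ` period_lattice \<sigma>"
    then obtain l where "S = (+) (-l) ` ?R" by blast
    then show "negligible S" using negligible_translation[OF neg, of "-l"] by (simp only:)
  qed
  then have "negligible (UNIV :: (complex^'h) set)" using cov negligible_subset by blast
  then show False by simp
qed



lemma msub_l: "(A::'a::comm_ring_1^'n^'m) ** (B - C) = A ** B - A ** C"
  by (simp add: vec_eq_iff matrix_matrix_mult_def sum_subtractf right_diff_distrib)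
lemma msub_r: "((A::'a::comm_ring_1^'n^'m) - B) ** C = A ** C - B ** C"
  by (simp add: vec_eq_iff matrix_matrix_mult_def sum_subtractf left_diff_distrib)
lemma madd_r: "((A::'a::comm_ring_1^'n^'m) + B) ** C = A ** C + B ** C"
  by (simp add: vec_eq_iff matrix_matrix_mult_def sum.distrib distrib_right)

definition cm :: "complex^'n^'m \<Rightarrow> complex^'n^'m" where "cm M = (\<chi> i j. cnj (M$i$j))"
definition cv :: "complex^'n \<Rightarrow> complex^'n" where "cv v = (\<chi> i. cnj (v$i))"

lemma cm_nth[simp]: "cm M $ i $ j = cnj (M$i$j)" by (simp add: cm_def)
lemma cv_nth[simp]: "cv v $ i = cnj (v$i)" by (simp add: cv_def)
lemma cm_mult: "cm (M ** N) = cm M ** cm N"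
  by (simp add: vec_eq_iff matrix_matrix_mult_def cnj_sum)
lemma cm_add: "cm (M + N) = cm M + cm N" by (simp add: vec_eq_iff)
lemma cm_vec: "cm M *v cv v = cv (M *v v)"
  by (simp add: vec_eq_iff matrix_vector_mult_def cnj_sum)
lemma cv_cv[simp]: "cv (cv v) = v" by (simp add: vec_eq_iff)

lemma im_inj:
  fixes \<tau> :: "complex^'g^'g"
  assumes d: "det (Im_mat \<tau>) \<noteq> 0"
  shows "inj ((*v) (cm \<tau> - \<tau>))"
proof -
  have invR: "inj ((*v) (Im_mat \<tau>))"
    using d invertible_det_nz invertible_left_inverse matrix_left_invertible_injective by metis
  have "x = 0" if x: "(cm \<tau> - \<tau>) *v x = 0" for x
  proof -
    have "(\<Sum>k\<in>UNIV. of_real (Im (\<tau>$i$k)) * x$k) = 0" for i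
    proof -
      have "((cm \<tau> - \<tau>) *v x)$i = 0" using x by simp
      then have "(\<Sum>k\<in>UNIV. (cnj (\<tau>$i$k) - \<tau>$i$k) * x$k) = 0"
        by (simp add: matrix_vector_mult_def)
      moreover have "(cnj (\<tau>$i$k) - \<tau>$i$k) * x$k = (- 2 * \<i>) * (of_real (Im (\<tau>$i$k)) * x$k)" for k
        by (simp add: complex_eq_iff algebra_simps)
      ultimately have "(- 2 * \<i>) * (\<Sum>k\<in>UNIV. of_real (Im (\<tau>$i$k)) * x$k) = 0"
        by (simp add: sum_distrib_left)
      then show ?thesis by simp
    qed
    note s = this
    have "(\<Sum>j\<in>UNIV. Im (\<tau> $ i $ j) * Re (x $ j)) = 0" for i
      using arg_cong[where f=Re, OF s[of i]] by (simp add: Re_sum)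
    moreover have "(\<Sum>j\<in>UNIV. Im (\<tau> $ i $ j) * Im (x $ j)) = 0" for i
      using arg_cong[where f=Im, OF s[of i]] by (simp add: Im_sum)
    ultimately have re: "Im_mat \<tau> *v (\<chi> k. Re (x$k)) = 0" and im: "Im_mat \<tau> *v (\<chi> k. Im (x$k)) = 0"
      by (auto simp: vec_eq_iff matrix_vector_mult_def Im_mat_def)
    have "(\<chi> k. Re (x$k)) = 0" using invR re by (metis injD matrix_vector_mult_0_right)
    moreover have "(\<chi> k. Im (x$k)) = 0" using invR im by (metis injD matrix_vector_mult_0_right)
    ultimately show "x = 0" by (simp add: vec_eq_iff complex_eq_iff)
  qed
  then have "\<forall>x. (cm \<tau> - \<tau>) *v x = 0 \<longrightarrow> x = 0" by blast
  then show ?thesis using matrix_left_invertible_ker matrix_left_invertible_injective by blast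
qed

lemma im_surj:
  fixes \<tau> :: "complex^'g^'g"
  assumes d: "det (Im_mat \<tau>) \<noteq> 0"
  shows "surj ((*v) (cm \<tau> - \<tau>))"
proof -
  have "invertible (cm \<tau> - \<tau>)"
    using im_inj[OF d] matrix_left_invertible_injective invertible_left_inverse by metis
  then show ?thesis using invertible_def matrix_right_invertible_surjective by metis
qed



lemma cm_int[simp]: "cm (\<chi> i j. of_int (f i j)) = (\<chi> i j. of_int (f i j))"
  by (simp add: vec_eq_iff)

lemma L2:
  fixes A :: "complex^'g^'h" and \<tau> :: "complex^'g^'g" and \<sigma> :: "complex^'h^'h"
  assumes d\<tau>: "det (Im_mat \<tau>) \<noteq> 0" and d\<sigma>: "det (Im_mat \<sigma>) \<noteq> 0"
    and hom: "\<And>z. z \<in> period_lattice \<tau> \<Longrightarrow> A *v z \<in> period_lattice \<sigma>"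
    and surjA: "surj ((*v) A)"
  shows "F_field \<sigma> \<subseteq> F_field \<tau>"
proof -
  have "\<forall>j. \<exists>p. A *v ivec (uv j) = \<sigma> *v ivec (fst p) + ivec (snd p)"
    using lat_E[OF hom[OF lat_unit]] by auto
  then obtain pB where pB: "\<And>j. A *v ivec (uv j) = \<sigma> *v ivec (fst (pB j)) + ivec (snd (pB j))"
    by metis
  have "\<forall>j. \<exists>p. A *v (\<chi> i. \<tau>$i$j) = \<sigma> *v ivec (fst p) + ivec (snd p)"
    using lat_E[OF hom[OF lat_col]] by auto
  then obtain pA where pA: "\<And>j. A *v (\<chi> i. \<tau>$i$j) = \<sigma> *v ivec (fst (pA j)) + ivec (snd (pA j))"
    by metis
  define a :: "complex^'g^'h" where "a = (\<chi> i j. of_int (fst (pA j) $ i))"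
  define b :: "complex^'g^'h" where "b = (\<chi> i j. of_int (fst (pB j) $ i))"
  define c :: "complex^'g^'h" where "c = (\<chi> i j. of_int (snd (pA j) $ i))"
  define d :: "complex^'g^'h" where "d = (\<chi> i j. of_int (snd (pB j) $ i))"
  have Abd: "A = \<sigma> ** b + d"
  proof -
    have "A$i$j = (\<sigma> ** b + d)$i$j" for i j
    proof -
      have "A$i$j = (A *v ivec (uv j))$i" by (simp add: mult_ivec_uv)
      also have "\<dots> = (\<sigma> ** b + d)$i$j" unfolding pB
        by (simp add: b_def d_def matrix_vector_mult_def matrix_matrix_mult_def)
      finally show ?thesis .
    qed
    then show ?thesis by (simp add: vec_eq_iff)
  qed
  have Aac: "A ** \<tau> = \<sigma> ** a + c"
  proof -
    have "(A ** \<tau>)$i$j = (\<sigma> ** a + c)$i$j" for i j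
    proof -
      have "(A ** \<tau>)$i$j = (A *v (\<chi> i. \<tau>$i$j))$i"
        by (simp add: matrix_vector_mult_def matrix_matrix_mult_def)
      also have "\<dots> = (\<sigma> ** a + c)$i$j" unfolding pA
        by (simp add: a_def c_def matrix_vector_mult_def matrix_matrix_mult_def)
      finally show ?thesis .
    qed
    then show ?thesis by (simp add: vec_eq_iff)
  qed
  define X where "X = a - b ** \<tau>"
  have E1: "\<sigma> ** X = d ** \<tau> - c"
  proof -
    have "\<sigma> ** X = \<sigma> ** a - (\<sigma> ** b) ** \<tau>" unfolding X_def msub_l matrix_mul_assoc ..
    also have "\<sigma> ** b = A - d" using Abd by simp
    also have "\<sigma> ** a = A ** \<tau> - c" using Aac by simp
    finally show ?thesis by (simp add: msub_r)
  qed
  have cAbd: "cm A = cm \<sigma> ** b + d" using arg_cong[where f=cm, OF Abd]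
    by (simp add: cm_add cm_mult b_def d_def)
  have cAac: "cm A ** cm \<tau> = cm \<sigma> ** a + c" using arg_cong[where f=cm, OF Aac]
    by (simp add: cm_add cm_mult a_def c_def)
  have E2: "(cm \<sigma> - \<sigma>) ** X = cm A ** (cm \<tau> - \<tau>)"
  proof -
    have "cm A ** (cm \<tau> - \<tau>) = cm A ** cm \<tau> - cm A ** \<tau>" by (rule msub_l)
    also have "\<dots> = cm \<sigma> ** a + c - (cm \<sigma> ** b ** \<tau> + d ** \<tau>)"
    proof -
      have "cm A ** \<tau> = cm \<sigma> ** b ** \<tau> + d ** \<tau>" unfolding cAbd madd_r ..
      then show ?thesis using cAac by simp
    qed
    also have "\<dots> = cm \<sigma> ** X - (d ** \<tau> - c)"
      unfolding X_def msub_l matrix_mul_assoc by simp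
    also have "\<dots> = (cm \<sigma> - \<sigma>) ** X" unfolding E1[symmetric] msub_r ..
    finally show ?thesis ..
  qed
  have surjX: "surj ((*v) X)"
  proof -
    have "\<exists>x. X *v x = y" for y
    proof -
      obtain z where z: "A *v z = cv ((cm \<sigma> - \<sigma>) *v y)" using surjA by (metis surjD)
      have w: "cm A *v cv z = (cm \<sigma> - \<sigma>) *v y" using z cm_vec by (metis cv_cv)
      obtain x where x: "(cm \<tau> - \<tau>) *v x = cv z" using im_surj[OF d\<tau>] by (metis surjD)
      have "(cm \<sigma> - \<sigma>) *v (X *v x) = (cm \<sigma> - \<sigma>) *v y"
        by (metis E2 matrix_vector_mul_assoc w x)
      then have "X *v x = y" using injD[OF im_inj[OF d\<sigma>]] by blast
      then show ?thesis by blast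
    qed
    then show ?thesis by (metis surjI)
  qed
  have injXT: "inj ((*v) (transpose X))"
  proof -
    obtain B where "X ** B = mat 1" using surjX matrix_right_invertible_surjective by metis
    then have "transpose B ** transpose X = mat 1" by (metis matrix_transpose_mul transpose_mat)
    then show ?thesis using matrix_left_invertible_injective by blast
  qed
  let ?K = "F_field \<tau>"
  have KF: "subfield_C ?K" by (rule F_subfield)
  have XK: "transpose X $ i $ j \<in> ?K" for i j
    unfolding X_def transpose_def
    by (auto simp: a_def b_def matrix_matrix_mult_def intro!: sfdiff[OF KF] sfsum[OF KF] sfmult[OF KF] sfint[OF KF] F_entry)
  have XSK: "(transpose X ** transpose \<sigma>) $ i $ j \<in> ?K" for i j
  proof -
    have "transpose X ** transpose \<sigma> = transpose (d ** \<tau> - c)"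
      by (simp only: matrix_transpose_mul[symmetric] E1)
    then show ?thesis unfolding transpose_def
      by (auto simp: c_def d_def matrix_matrix_mult_def intro!: sfdiff[OF KF] sfsum[OF KF] sfmult[OF KF] sfint[OF KF] F_entry)
  qed
  show ?thesis
  proof (rule F_subI[OF KF])
    fix i j
    have "transpose \<sigma> $ j $ i \<in> ?K" by (rule core[OF KF injXT XK XSK])
    then show "\<sigma>$i$j \<in> ?K" by (simp add: transpose_def)
  qed
qed



definition Bm :: "complex^'g^'g \<Rightarrow> complex^'g^'g" where
  "Bm \<tau> = (\<chi> i j. complex_of_real (Im (\<tau>$j$i)))"

lemma Bm_nth[simp]: "Bm \<tau> $ i $ j = complex_of_real (Im (\<tau>$j$i))" by (simp add: Bm_def)

lemma int_vec_choose:
  assumes "\<And>j. (f j :: real) \<in> \<int>"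
  obtains m :: "int^'g" where "\<And>j. f j = of_int (m$j)"
proof -
  have "\<forall>j. \<exists>k::int. f j = of_int k" using assms by (metis Ints_cases)
  then obtain g where "\<And>j. f j = of_int (g j)" by metis
  then show ?thesis using that[of "\<chi> j. g j"] by simp
qed

lemma D1:
  fixes \<tau> :: "complex^'g^'g"
  assumes w: "w \<in> dual_lattice \<tau>"
  shows "Bm \<tau> *v w \<in> period_lattice (transpose \<tau>)"
proof -
  have w': "Im (\<Sum>i\<in>UNIV. w $ i * cnj (v $ i)) \<in> \<int>" if "v \<in> period_lattice \<tau>" for v
    using w that unfolding dual_lattice_def by blast
  have hI: "Im (w$j) \<in> \<int>" for j
  proof -
    have "(\<Sum>i\<in>UNIV. w $ i * cnj (ivec (uv j) $ i)) = w$j"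
      by (simp add: if_distrib cong: if_cong)
    then show ?thesis using w'[OF lat_unit[of j \<tau>]] by simp
  qed
  obtain m :: "int^'g" where m: "\<And>j. Im (w$j) = of_int (m$j)"
    using int_vec_choose[of "\<lambda>j. Im (w$j)", OF hI] by blast
  have hK: "Im (\<Sum>i\<in>UNIV. w $ i * cnj (\<tau>$i$l)) \<in> \<int>" for l
    using w'[OF lat_col[of \<tau> l]] by simp
  obtain k :: "int^'g" where k: "\<And>l. Im (\<Sum>i\<in>UNIV. w $ i * cnj (\<tau>$i$l)) = of_int (k$l)"
    using int_vec_choose[of "\<lambda>l. Im (\<Sum>i\<in>UNIV. w $ i * cnj (\<tau>$i$l))", OF hK] by blast
  have kk: "(\<Sum>i\<in>UNIV. Im (w$i) * Re (\<tau>$i$l) - Re (w$i) * Im (\<tau>$i$l)) = of_int (k$l)" for l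
    using k[of l] by (simp add: Im_sum algebra_simps)
  have "Bm \<tau> *v w = transpose \<tau> *v ivec m + ivec (- k)"
  proof -
    have "(Bm \<tau> *v w)$l = (transpose \<tau> *v ivec m + ivec (- k))$l" for l
    proof (rule complex_eqI)
      show "Re ((Bm \<tau> *v w)$l) = Re ((transpose \<tau> *v ivec m + ivec (- k))$l)"
        using kk[of l] by (simp add: matrix_vector_mult_def transpose_def Re_sum m sum_subtractf algebra_simps)
      show "Im ((Bm \<tau> *v w)$l) = Im ((transpose \<tau> *v ivec m + ivec (- k))$l)"
        by (simp add: matrix_vector_mult_def transpose_def Im_sum m algebra_simps)
    qed
    then show ?thesis by (simp add: vec_eq_iff)
  qed
  then show ?thesis using lat_mem by metis
qed

lemma D2:
  fixes \<tau> :: "complex^'g^'g"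
  assumes d: "det (Im_mat \<tau>) \<noteq> 0"
    and bw: "Bm \<tau> *v w \<in> period_lattice (transpose \<tau>)"
  shows "w \<in> dual_lattice \<tau>"
proof -
  obtain m n where mn: "Bm \<tau> *v w = transpose \<tau> *v ivec m + ivec n" using lat_E[OF bw] by blast
  have comp: "(\<Sum>i\<in>UNIV. complex_of_real (Im (\<tau>$i$l)) * w$i) = (\<Sum>i\<in>UNIV. \<tau>$i$l * of_int (m$i)) + of_int (n$l)" for l
    using arg_cong[where f="\<lambda>v. v$l", OF mn] by (simp add: matrix_vector_mult_def transpose_def)
  have hIm: "(\<Sum>i\<in>UNIV. Im (\<tau>$i$l) * Im (w$i)) = (\<Sum>i\<in>UNIV. Im (\<tau>$i$l) * of_int (m$i))" for l
    using arg_cong[where f=Im, OF comp[of l]] by (simp add: Im_sum)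
  have hRe: "(\<Sum>i\<in>UNIV. Im (\<tau>$i$l) * Re (w$i)) = (\<Sum>i\<in>UNIV. Re (\<tau>$i$l) * of_int (m$i)) + of_int (n$l)" for l
    using arg_cong[where f=Re, OF comp[of l]] by (simp add: Re_sum)
  have invT: "inj ((*v) (transpose (Im_mat \<tau>)))"
    using d det_transpose invertible_det_nz invertible_left_inverse matrix_left_invertible_injective by metis
  have "transpose (Im_mat \<tau>) *v (\<chi> i. Im (w$i) - of_int (m$i)) = 0"
    using hIm by (simp add: vec_eq_iff matrix_vector_mult_def transpose_def Im_mat_def right_diff_distrib sum_subtractf)
  then have "(\<chi> i. Im (w$i) - of_int (m$i)) = 0" using invT by (metis injD matrix_vector_mult_0_right)
  then have y: "Im (w$i) = of_int (m$i)" for i by (simp add: vec_eq_iff)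
  show ?thesis unfolding dual_lattice_def
  proof (intro CollectI ballI)
    fix v assume "v \<in> period_lattice \<tau>"
    then obtain p q where v: "v = \<tau> *v ivec p + ivec q" using lat_E by blast
    let ?x = "\<lambda>j. Re (w$j)"
    have "Im (\<Sum>j\<in>UNIV. w $ j * cnj (v $ j))
        = (\<Sum>j\<in>UNIV. of_int (m$j) * ((\<Sum>l\<in>UNIV. Re (\<tau>$j$l) * of_int (p$l)) + of_int (q$j))
              - ?x j * (\<Sum>l\<in>UNIV. Im (\<tau>$j$l) * of_int (p$l)))"
      unfolding v by (simp add: Im_sum Re_sum matrix_vector_mult_def y sum_negf algebra_simps)
    also have "\<dots> = (\<Sum>j\<in>UNIV. \<Sum>l\<in>UNIV. of_int (m$j) * Re (\<tau>$j$l) * of_int (p$l))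
          + (\<Sum>j\<in>UNIV. of_int (m$j) * of_int (q$j))
          - (\<Sum>j\<in>UNIV. \<Sum>l\<in>UNIV. ?x j * Im (\<tau>$j$l) * of_int (p$l))"
      by (simp add: sum_subtractf sum.distrib sum_distrib_left distrib_left mult.assoc)
    also have "(\<Sum>j\<in>UNIV. \<Sum>l\<in>UNIV. ?x j * Im (\<tau>$j$l) * of_int (p$l))
        = (\<Sum>l\<in>UNIV. of_int (p$l) * ((\<Sum>i\<in>UNIV. Re (\<tau>$i$l) * of_int (m$i)) + of_int (n$l)))"
    proof -
      have "(\<Sum>j\<in>UNIV. \<Sum>l\<in>UNIV. ?x j * Im (\<tau>$j$l) * of_int (p$l))
          = (\<Sum>l\<in>UNIV. \<Sum>j\<in>UNIV. ?x j * Im (\<tau>$j$l) * of_int (p$l))" by (rule sum.swap)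
      also have "\<dots> = (\<Sum>l\<in>UNIV. of_int (p$l) * (\<Sum>j\<in>UNIV. Im (\<tau>$j$l) * ?x j))"
        by (simp add: sum_distrib_left mult_ac)
      finally show ?thesis by (simp add: hRe)
    qed
    also have "(\<Sum>l\<in>UNIV. of_int (p$l) * ((\<Sum>i\<in>UNIV. Re (\<tau>$i$l) * of_int (m$i)) + of_int (n$l)))
        = (\<Sum>j\<in>UNIV. \<Sum>l\<in>UNIV. of_int (m$j) * Re (\<tau>$j$l) * of_int (p$l))
          + (\<Sum>l\<in>UNIV. of_int (p$l) * of_int (n$l))"
    proof -
      have "(\<Sum>l\<in>UNIV. of_int (p$l) * ((\<Sum>i\<in>UNIV. Re (\<tau>$i$l) * of_int (m$i)) + of_int (n$l)))
         = (\<Sum>l\<in>UNIV. \<Sum>j\<in>UNIV. of_int (m$j) * Re (\<tau>$j$l) * of_int (p$l))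
          + (\<Sum>l\<in>UNIV. of_int (p$l) * of_int (n$l))"
        by (simp add: sum.distrib sum_distrib_left distrib_left mult_ac)
      also have "(\<Sum>l\<in>UNIV. \<Sum>j\<in>UNIV. of_int (m$j) * Re (\<tau>$j$l) * of_int (p$l))
          = (\<Sum>j\<in>UNIV. \<Sum>l\<in>UNIV. of_int (m$j) * Re (\<tau>$j$l) * (of_int (p$l) :: real))"
        by (rule sum.swap)
      finally show ?thesis .
    qed
    also have "(\<Sum>j\<in>UNIV. \<Sum>l\<in>UNIV. of_int (m$j) * Re (\<tau>$j$l) * of_int (p$l))
          + (\<Sum>j\<in>UNIV. of_int (m$j) * of_int (q$j))
          - ((\<Sum>j\<in>UNIV. \<Sum>l\<in>UNIV. of_int (m$j) * Re (\<tau>$j$l) * of_int (p$l))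
          + (\<Sum>l\<in>UNIV. of_int (p$l) * of_int (n$l)))
        = (\<Sum>j\<in>UNIV. of_int (m$j) * of_int (q$j)) - (\<Sum>l\<in>UNIV. of_int (p$l) * (of_int (n$l)::real))"
      by simp
    also have "\<dots> = of_int ((\<Sum>j\<in>UNIV. m$j * q$j) - (\<Sum>l\<in>UNIV. p$l * n$l))" by simp
    finally have "Im (\<Sum>j\<in>UNIV. w $ j * cnj (v $ j)) = of_int ((\<Sum>j\<in>UNIV. m$j * q$j) - (\<Sum>l\<in>UNIV. p$l * n$l))" .
    then show "Im (\<Sum>j\<in>UNIV. w $ j * cnj (v $ j)) \<in> \<int>" by (metis Ints_of_int)
  qed
qed



lemma Qdeg_mono: "K \<subseteq> L \<Longrightarrow> Q_degree K \<le> Q_degree L"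
  unfolding Q_degree_def by (rule Sup_subset_mono) blast

lemma F_transpose: "F_field (transpose \<tau>) = F_field \<tau>"
proof
  show "F_field (transpose \<tau>) \<subseteq> F_field \<tau>"
    by (rule F_subI[OF F_subfield]) (simp add: transpose_def F_entry)
  show "F_field \<tau> \<subseteq> F_field (transpose \<tau>)"
  proof (rule F_subI[OF F_subfield])
    fix i j show "\<tau>$i$j \<in> F_field (transpose \<tau>)"
      using F_entry[of "transpose \<tau>" j i] by (simp add: transpose_def)
  qed
qed

lemma inv_inj: "invertible (M :: 'a::field^'n^'n) \<Longrightarrow> inj ((*v) M)"
  using invertible_left_inverse matrix_left_invertible_injective by metis

lemma Bm_inv:
  fixes \<tau> :: "complex^'g^'g"
  assumes d: "det (Im_mat \<tau>) \<noteq> 0"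
  shows "invertible (Bm \<tau>)"
proof -
  have invT: "inj ((*v) (transpose (Im_mat \<tau>)))"
    using d det_transpose invertible_det_nz invertible_left_inverse matrix_left_invertible_injective by metis
  have "x = 0" if x: "Bm \<tau> *v x = 0" for x
  proof -
    have s: "(\<Sum>k\<in>UNIV. of_real (Im (\<tau>$k$i)) * x$k) = 0" for i
      using arg_cong[where f="\<lambda>v. v$i", OF x] by (simp add: matrix_vector_mult_def)
    have "(\<Sum>j\<in>UNIV. Im (\<tau> $ j $ i) * Re (x $ j)) = 0" for i
      using arg_cong[where f=Re, OF s[of i]] by (simp add: Re_sum)
    moreover have "(\<Sum>j\<in>UNIV. Im (\<tau> $ j $ i) * Im (x $ j)) = 0" for i
      using arg_cong[where f=Im, OF s[of i]] by (simp add: Im_sum)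
    ultimately have re: "transpose (Im_mat \<tau>) *v (\<chi> k. Re (x$k)) = 0"
      and im: "transpose (Im_mat \<tau>) *v (\<chi> k. Im (x$k)) = 0"
      by (auto simp: vec_eq_iff matrix_vector_mult_def Im_mat_def transpose_def)
    have "(\<chi> k. Re (x$k)) = 0" using invT re by (metis injD matrix_vector_mult_0_right)
    moreover have "(\<chi> k. Im (x$k)) = 0" using invT im by (metis injD matrix_vector_mult_0_right)
    ultimately show "x = 0" by (simp add: vec_eq_iff complex_eq_iff)
  qed
  then have "\<forall>x. Bm \<tau> *v x = 0 \<longrightarrow> x = 0" by blast
  then have "inj ((*v) (Bm \<tau>))" using matrix_left_invertible_ker matrix_left_invertible_injective by blast
  then show ?thesis using matrix_left_invertible_injective invertible_left_inverse by metis
qed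

lemma iso_F:
  fixes \<tau> \<tau>' M :: "complex^'g^'g"
  assumes M: "invertible M" and img: "(\<lambda>w. M *v w) ` period_lattice \<tau> = period_lattice \<tau>'"
  shows "F_field \<tau>' = F_field \<tau>"
proof
  obtain N where N: "M ** N = mat 1" "N ** M = mat 1" using M unfolding invertible_def by blast
  have iN: "invertible N" using N unfolding invertible_def by blast
  show "F_field \<tau> \<subseteq> F_field \<tau>'"
    by (rule L1[OF inv_inj[OF M]]) (use img in blast)
  show "F_field \<tau>' \<subseteq> F_field \<tau>"
  proof (rule L1[OF inv_inj[OF iN]])
    fix z assume "z \<in> period_lattice \<tau>'"
    then obtain u where "u \<in> period_lattice \<tau>" "z = M *v u" using img by blast
    then show "N *v z \<in> period_lattice \<tau>" using N by (simp add: matrix_vector_mul_assoc)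
  qed
qed

lemma dual_F:
  fixes \<tau> \<tau>' M :: "complex^'g^'g"
  assumes d: "det (Im_mat \<tau>) \<noteq> 0" and M: "invertible M"
    and img: "(\<lambda>w. M *v w) ` dual_lattice \<tau> = period_lattice \<tau>'"
  shows "F_field \<tau>' = F_field \<tau>"
proof -
  obtain N where N: "M ** N = mat 1" "N ** M = mat 1" using M unfolding invertible_def by blast
  have iN: "invertible N" using N unfolding invertible_def by blast
  have iB: "invertible (Bm \<tau>)" by (rule Bm_inv[OF d])
  obtain C where C: "Bm \<tau> ** C = mat 1" "C ** Bm \<tau> = mat 1" using iB unfolding invertible_def by blast
  have iC: "invertible C" using C unfolding invertible_def by blast
  have "F_field \<tau>' \<subseteq> F_field (transpose \<tau>)"
  proof (rule L1[OF inv_inj[OF invertible_mult[OF iB iN]]])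
    fix z assume "z \<in> period_lattice \<tau>'"
    then obtain w where w: "w \<in> dual_lattice \<tau>" "z = M *v w" using img by blast
    have "(Bm \<tau> ** N) *v z = Bm \<tau> *v w"
      using w(2) N by (metis matrix_vector_mul_assoc matrix_vector_mul_lid)
    then show "(Bm \<tau> ** N) *v z \<in> period_lattice (transpose \<tau>)" using D1[OF w(1)] by simp
  qed
  moreover have "F_field (transpose \<tau>) \<subseteq> F_field \<tau>'"
  proof (rule L1[OF inv_inj[OF invertible_mult[OF M iC]]])
    fix u assume u: "u \<in> period_lattice (transpose \<tau>)"
    have "Bm \<tau> *v (C *v u) = u" using C by (metis matrix_vector_mul_assoc matrix_vector_mul_lid)
    then have "C *v u \<in> dual_lattice \<tau>" using D2[OF d] u by simp
    then have "M *v (C *v u) \<in> period_lattice \<tau>'" using img by blast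
    then show "(M ** C) *v u \<in> period_lattice \<tau>'" by (simp add: matrix_vector_mul_assoc)
  qed
  ultimately show ?thesis using F_transpose by blast
qed

theorem proposition2p2:
  fixes \<tau> :: "complex^'g^'g" and \<sigma> :: "complex^'h^'h" and A :: "complex^'g^'h"
  assumes "det (Im_mat \<tau>) \<noteq> 0" and "det (Im_mat \<sigma>) \<noteq> 0"
    and "is_torus_hom \<tau> \<sigma> A"
  shows "(finite (hom_kernel \<tau> \<sigma> A) \<longrightarrow>
            F_field \<tau> \<subseteq> F_field \<sigma> \<and> Q_degree (F_field \<tau>) \<le> Q_degree (F_field \<sigma>))
       \<and> (hom_surjective \<sigma> A \<longrightarrow>
            F_field \<sigma> \<subseteq> F_field \<tau> \<and> Q_degree (F_field \<sigma>) \<le> Q_degree (F_field \<tau>))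
       \<and> (is_isogeny \<tau> \<sigma> A \<longrightarrow>
            F_field \<tau> = F_field \<sigma> \<and> Q_degree (F_field \<tau>) = Q_degree (F_field \<sigma>))
       \<and> (\<forall>(\<tau>' :: complex^'g^'g) (M :: complex^'g^'g).
            det (Im_mat \<tau>') \<noteq> 0 \<and> invertible M \<and>
            (\<lambda>w. M *v w) ` dual_lattice \<tau> = period_lattice \<tau>' \<longrightarrow>
            F_field \<tau>' = F_field \<tau>)
       \<and> (\<forall>(\<tau>' :: complex^'g^'g) (M :: complex^'g^'g).
            det (Im_mat \<tau>') \<noteq> 0 \<and> invertible M \<and>
            (\<lambda>w. M *v w) ` period_lattice \<tau> = period_lattice \<tau>' \<longrightarrow>
            F_field \<tau>' = F_field \<tau> \<and> Q_degree (F_field \<tau>') = Q_degree (F_field \<tau>))"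
proof -
  have hom: "\<And>z. z \<in> period_lattice \<tau> \<Longrightarrow> A *v z \<in> period_lattice \<sigma>"
    using assms(3) unfolding is_torus_hom_def by blast
  have P1: "finite (hom_kernel \<tau> \<sigma> A) \<Longrightarrow> F_field \<tau> \<subseteq> F_field \<sigma>"
    by (rule L1[OF kernel_inj hom])
  have P2: "hom_surjective \<sigma> A \<Longrightarrow> F_field \<sigma> \<subseteq> F_field \<tau>"
    by (rule L2[OF assms(1,2) hom surj_from_hom_surjective])
  show ?thesis
  proof (intro conjI impI allI)
    assume "finite (hom_kernel \<tau> \<sigma> A)"
    then show "F_field \<tau> \<subseteq> F_field \<sigma>" "Q_degree (F_field \<tau>) \<le> Q_degree (F_field \<sigma>)"
      using P1 Qdeg_mono by auto
  next
    assume "hom_surjective \<sigma> A"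
    then show "F_field \<sigma> \<subseteq> F_field \<tau>" "Q_degree (F_field \<sigma>) \<le> Q_degree (F_field \<tau>)"
      using P2 Qdeg_mono by auto
  next
    assume "is_isogeny \<tau> \<sigma> A"
    then have "F_field \<tau> = F_field \<sigma>" using P1 P2 unfolding is_isogeny_def by blast
    then show "F_field \<tau> = F_field \<sigma>" "Q_degree (F_field \<tau>) = Q_degree (F_field \<sigma>)" by auto
  next
    fix \<tau>' M :: "complex^'g^'g"
    assume "det (Im_mat \<tau>') \<noteq> 0 \<and> invertible M \<and> (\<lambda>w. M *v w) ` dual_lattice \<tau> = period_lattice \<tau>'"
    then show "F_field \<tau>' = F_field \<tau>" using dual_F[OF assms(1)] by blast
  next
    fix \<tau>' M :: "complex^'g^'g"
    assume "det (Im_mat \<tau>') \<noteq> 0 \<and> invertible M \<and> (\<lambda>w. M *v w) ` period_lattice \<tau> = period_lattice \<tau>'"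
    then have "F_field \<tau>' = F_field \<tau>" using iso_F by blast
    then show "F_field \<tau>' = F_field \<tau>" "Q_degree (F_field \<tau>') = Q_degree (F_field \<tau>)" by auto
  qed
qed

end
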